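(* Let $C_2\subseteq C_1\subseteq\mathbb{F}_2^n$ be linear codes with bases $\beta_2\subseteq\beta_1$, respectively, $Q=Q(C_1,C_2)$ the corresponding CSS code, $\beta_1\setminus\beta_2=\{w_1,\ldots,w_K\}$ (used as encoding), and $N=2^\ell$ ($\ell$ a positive integer). Then: (1) $(1,\ldots,1)\in T_N$ if and only if $wt\left(u+\sum_{i=1}^K v_iw_i\right)\equiv\sum_{i=1}^K v_i\, wt(w_i)\pmod N$ for all $u\in C_2$ and $v\in\mathbb{F}_2^K$; (2) $(1,\ldots,1)\in T_N$ and the logical action of $U(1,\ldots,1)$ is $U(1)^{\otimes K}$ if and only if $wt\left(u+\sum_{i=1}^K v_iw_i\right)\equiv\sum_{i=1}^K v_i\pmod N$ for all $u\in C_2$ and $v\in\mathbb{F}_2^K$; (3) $(1,\ldots,1)\in Id_N$ if and only if $C_1$ is an $N$-divisible code.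
   Context: $wt$ denotes Hamming weight; sums $u+\sum v_iw_i$ are in $\mathbb{F}_2^n$ while $\sum_i v_i wt(w_i)$ and $\sum_iv_i$ are integers. A code is $N$-divisible if $N$ divides the weight of every codeword. $\omega=e^{2\pi\mathbf{i}/N}$, $U(a)=\mathrm{diag}(1,\omega^a)$, $U(b)=\bigotimes_iU(b_i)$ for $b\in\mathbb{Z}_N^n$. $Q(C_1,C_2)$ is the subspace of $(\mathbb{C}^2)^{\otimes n}$ stabilized by all $X(u)Z(v)$, $u\in C_2$, $v\in C_1^\perp$. Logical states are $|v\rangle_L=|C_2|^{-1/2}\sum_{u\in C_2}|u+\sum_iv_iw_i\rangle$, $v\in\mathbb{F}_2^K$; the logical action of $U$ with $UQ=Q$ is $\mathcal{E}^{-1}U\mathcal{E}$ on $(\mathbb{C}^2)^{\otimes K}$, $\mathcal{E}:|v\rangle\mapsto|v\rangle_L$. $H_N=\{b\in\mathbb{Z}_N^n:U(b)Q=Q\}$; $T_N=\{b\in H_N:$ the logical action of $U(b)$ equals $\bigotimes_{i=1}^KE_i$ for some unitaries $E_i\in\mathbb{C}^{2\times2}\}$; $Id_N=\{b\in H_N:U(b)x=x\ \forall x\in Q\}$. *)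

theory Defs
  imports "HOL-Analysis.Analysis" "HOL-Library.Z2"
begin

definition wt :: "bit ^ 'n \<Rightarrow> nat" where
  "wt x = card {i. x $ i = 1}"

definition bdot :: "bit ^ 'n \<Rightarrow> bit ^ 'n \<Rightarrow> bit" where
  "bdot x y = (\<Sum>i\<in>UNIV. x $ i * y $ i)"

definition dual_code :: "(bit ^ 'n) set \<Rightarrow> (bit ^ 'n) set" where
  "dual_code C = {v. \<forall>u\<in>C. bdot u v = 0}"

definition is_basis_of :: "(bit ^ 'n) set \<Rightarrow> (bit ^ 'n) set \<Rightarrow> bool" where
  "is_basis_of \<beta> C \<longleftrightarrow> vec.subspace C \<and> \<beta> \<subseteq> C \<and> vec.independent \<beta> \<and> vec.span \<beta> = C"

definition divisible_code :: "nat \<Rightarrow> (bit ^ 'n) set \<Rightarrow> bool" where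
  "divisible_code N C \<longleftrightarrow> (\<forall>c\<in>C. N dvd wt c)"

text \<open>F_2^K for K a natural number: functions nat => bit vanishing from index K on.\<close>
definition bvecs :: "nat \<Rightarrow> (nat \<Rightarrow> bit) set" where
  "bvecs K = {v. \<forall>i\<ge>K. v i = 0}"

section \<open>States: (C^2)^{\<otimes>n} as functions (bit^'n) => complex (coefficients in the computational basis)\<close>

type_synonym 'n state = "bit ^ 'n \<Rightarrow> complex"

definition ket :: "bit ^ 'n \<Rightarrow> 'n state" where
  "ket x = (\<lambda>y. if y = x then 1 else 0)"

definition sgn_bit :: "bit \<Rightarrow> complex" where
  "sgn_bit s = (if s = 0 then 1 else -1)"

text \<open>X(u)Z(v), where Z(v)|x> = (-1)^(v.x)|x> and X(u)|x> = |x+u>.\<close>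
definition XZ :: "bit ^ 'n \<Rightarrow> bit ^ 'n \<Rightarrow> 'n state \<Rightarrow> 'n state" where
  "XZ u v f = (\<lambda>y. sgn_bit (bdot v (y + u)) * f (y + u))"

definition CSS :: "(bit ^ 'n) set \<Rightarrow> (bit ^ 'n) set \<Rightarrow> 'n state set" where
  "CSS C1 C2 = {f. \<forall>u\<in>C2. \<forall>v\<in>dual_code C1. XZ u v f = f}"

definition omega :: "nat \<Rightarrow> complex" where
  "omega N = exp (2 * pi * \<i> / of_nat N)"

text \<open>U(b) = tensor product of diag(1, omega^(b_i)), for b in Z_N^n (entries in {0..<N}).\<close>
definition Ugate :: "nat \<Rightarrow> nat ^ 'n \<Rightarrow> 'n state \<Rightarrow> 'n state" where
  "Ugate N b f = (\<lambda>x. (\<Prod>i\<in>UNIV. if x $ i = 1 then omega N ^ (b $ i) else 1) * f x)"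

text \<open>Logical space (C^2)^{\<otimes>K}: functions on F_2^K (zero outside).\<close>
definition LS :: "nat \<Rightarrow> ((nat \<Rightarrow> bit) \<Rightarrow> complex) set" where
  "LS K = {g. \<forall>v. v \<notin> bvecs K \<longrightarrow> g v = 0}"

definition encword :: "(nat \<Rightarrow> bit ^ 'n) \<Rightarrow> nat \<Rightarrow> (nat \<Rightarrow> bit) \<Rightarrow> bit ^ 'n" where
  "encword w K v = (\<Sum>i<K. v i *s w i)"

definition logket :: "(bit ^ 'n) set \<Rightarrow> (nat \<Rightarrow> bit ^ 'n) \<Rightarrow> nat \<Rightarrow> (nat \<Rightarrow> bit) \<Rightarrow> 'n state" where
  "logket C2 w K v = (\<lambda>y. (1 / complex_of_real (sqrt (real (card C2)))) *
       (\<Sum>u\<in>C2. ket (u + encword w K v) y))"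

text \<open>The encoding map E : |v> |-> |v>_L, extended linearly.\<close>
definition enc :: "(bit ^ 'n) set \<Rightarrow> (nat \<Rightarrow> bit ^ 'n) \<Rightarrow> nat \<Rightarrow> ((nat \<Rightarrow> bit) \<Rightarrow> complex) \<Rightarrow> 'n state" where
  "enc C2 w K g = (\<lambda>y. \<Sum>v\<in>bvecs K. g v * logket C2 w K v y)"

definition logical_action :: "(bit ^ 'n) set \<Rightarrow> (nat \<Rightarrow> bit ^ 'n) \<Rightarrow> nat \<Rightarrow> ('n state \<Rightarrow> 'n state)
    \<Rightarrow> ((nat \<Rightarrow> bit) \<Rightarrow> complex) \<Rightarrow> ((nat \<Rightarrow> bit) \<Rightarrow> complex)" where
  "logical_action C2 w K U g = the_inv_into (LS K) (enc C2 w K) (U (enc C2 w K g))"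

text \<open>2x2 matrices as functions row => column => entry.\<close>
definition unitary2 :: "(bit \<Rightarrow> bit \<Rightarrow> complex) \<Rightarrow> bool" where
  "unitary2 A \<longleftrightarrow> (\<forall>a b. (\<Sum>k\<in>{0,1}. cnj (A k a) * A k b) = (if a = b then 1 else 0))"

text \<open>Tensor product E_1 \<otimes> ... \<otimes> E_K acting on the logical space.\<close>
definition tensor_op :: "nat \<Rightarrow> (nat \<Rightarrow> bit \<Rightarrow> bit \<Rightarrow> complex)
    \<Rightarrow> ((nat \<Rightarrow> bit) \<Rightarrow> complex) \<Rightarrow> ((nat \<Rightarrow> bit) \<Rightarrow> complex)" where
  "tensor_op K E g = (\<lambda>v'. if v' \<in> bvecs K
      then (\<Sum>v\<in>bvecs K. (\<Prod>i<K. E i (v' i) (v i)) * g v) else 0)"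

definition U1 :: "nat \<Rightarrow> nat \<Rightarrow> bit \<Rightarrow> bit \<Rightarrow> complex" where
  "U1 N a r c = (if r = c then (if r = 1 then omega N ^ a else 1) else 0)"

definition H_N :: "nat \<Rightarrow> (bit ^ 'n) set \<Rightarrow> (bit ^ 'n) set \<Rightarrow> (nat ^ 'n) set" where
  "H_N N C1 C2 = {b. (\<forall>i. b $ i < N) \<and> Ugate N b ` CSS C1 C2 = CSS C1 C2}"

definition T_N :: "nat \<Rightarrow> (bit ^ 'n) set \<Rightarrow> (bit ^ 'n) set \<Rightarrow> (nat \<Rightarrow> bit ^ 'n) \<Rightarrow> nat \<Rightarrow> (nat ^ 'n) set" where
  "T_N N C1 C2 w K = {b \<in> H_N N C1 C2. \<exists>E. (\<forall>i<K. unitary2 (E i)) \<and>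
      (\<forall>g\<in>LS K. logical_action C2 w K (Ugate N b) g = tensor_op K E g)}"

definition Id_N :: "nat \<Rightarrow> (bit ^ 'n) set \<Rightarrow> (bit ^ 'n) set \<Rightarrow> (nat ^ 'n) set" where
  "Id_N N C1 C2 = {b \<in> H_N N C1 C2. \<forall>x\<in>CSS C1 C2. Ugate N b x = x}"

definition ones :: "nat ^ 'n" where
  "ones = (\<chi> i. 1)"

end

theory Submission
  imports Defs
begin



lemma bitvec_add_self [simp]: "(x::bit^'n) + x = 0"
  by (simp add: vec_eq_iff)

lemma bitvec_two_mult [simp]: "2 * (x::bit^'n) = 0"
  by (simp add: vec_eq_iff)

lemma bitvec_minus [simp]: "- (x::bit^'n) = x"
  by (simp add: vec_eq_iff)

lemma bitvec_diff [simp]: "(x::bit^'n) - y = x + y"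
  by (simp add: vec_eq_iff)

lemma bdot_sym: "bdot x y = bdot y x"
  unfolding bdot_def by (rule sum.cong[OF refl]) (rule mult.commute)

lemma omega_N: "N > 0 \<Longrightarrow> omega N ^ N = 1"
proof -
  assume "N > 0"
  have "omega N ^ N = exp (of_nat N * (2 * pi * \<i> / of_nat N))"
    unfolding omega_def by (simp only: exp_of_nat_mult)
  also have "\<dots> = exp (2 * pi * \<i>)" using \<open>N>0\<close> by simp
  finally show ?thesis by simp
qed

lemma omega_nz: "omega N \<noteq> 0" unfolding omega_def by simp

lemma omega_pow_1: assumes "N > 0" "k < N" "omega N ^ k = 1" shows "k = 0"
proof -
  have "exp (of_nat k * (2 * pi * \<i> / of_nat N)) = 1"
    using assms(3) unfolding omega_def exp_of_nat_mult .
  then obtain n :: int where n: "Im (of_nat k * (2 * pi * \<i> / of_nat N)) = of_int (2 * n) * pi"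
    unfolding exp_eq_1 by blast
  have "real k * 2 * pi / real N = real_of_int (2*n) * pi" using n by simp
  then have "2 * (pi * (real k / real N)) = 2 * (pi * real_of_int n)" by (simp add: field_simps)
  then have "pi * (real k / real N) = pi * real_of_int n" by simp
  then have "real k / real N = real_of_int n" using pi_gt_zero
    by (metis mult_cancel_left pi_neq_zero)
  then have "real k = real_of_int n * real N" using assms(1) by (simp add: field_simps)
  moreover have "real k < real N" using assms(2) by simp
  ultimately have "n < 1"
  proof -
    assume a: "real k = real_of_int n * real N" "real k < real N"
    show "n < 1"
    proof (rule ccontr)
      assume "\<not> n < 1" then have "real_of_int n \<ge> 1" by simp
      then have "real_of_int n * real N \<ge> 1 * real N" by (rule mult_right_mono) simp
      then show False using a by linarith
    qed
  qed
  moreover have "n \<ge> 0"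
  proof (rule ccontr)
    assume "\<not> n \<ge> 0" then have "real_of_int n < 0" by simp
    then have "real_of_int n * real N < 0" using assms(1) by (simp add: mult_neg_pos)
    then show False using \<open>real k = real_of_int n * real N\<close> by linarith
  qed
  ultimately have "n = 0" by simp
  then show ?thesis using \<open>real k = real_of_int n * real N\<close> by simp
qed

lemma omega_pow_mod: "N > 0 \<Longrightarrow> omega N ^ a = omega N ^ (a mod N)"
proof -
  assume "N > 0"
  have "a = N * (a div N) + a mod N" by simp
  then have "omega N ^ a = (omega N ^ N) ^ (a div N) * omega N ^ (a mod N)"
    by (metis power_add power_mult)
  then show ?thesis using omega_N[OF \<open>N>0\<close>] by simp
qed

lemma omega_pow_eq: assumes "N > 0" shows "omega N ^ a = omega N ^ b \<longleftrightarrow> a mod N = b mod N"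
proof
  assume "a mod N = b mod N" then show "omega N ^ a = omega N ^ b"
    using omega_pow_mod[OF assms] by metis
next
  assume h: "omega N ^ a = omega N ^ b"
  have h2: "omega N ^ (a mod N) = omega N ^ (b mod N)" using h omega_pow_mod[OF assms] by metis
  have *: "x = y" if "x < N" "y < N" "y \<le> x" "omega N ^ x = omega N ^ y" for x y
  proof -
    have "omega N ^ y * omega N ^ (x - y) = omega N ^ y * 1"
      using that by (simp flip: power_add)
    then have "omega N ^ (x - y) = 1" using omega_nz by simp
    then have "x - y = 0" using omega_pow_1[OF assms, of "x - y"] that by linarith
    then show ?thesis using that by simp
  qed
  show "a mod N = b mod N"
  proof (cases "b mod N \<le> a mod N")
    case True then show ?thesis using *[of "a mod N" "b mod N"] h2 assms by simp
  next
    case False then show ?thesis using *[of "b mod N" "a mod N"] h2 assms by simp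
  qed
qed

lemma norm_omega: "norm (omega N) = 1"
  unfolding omega_def by (simp add: norm_exp_eq_Re)

lemma Ugate_ones: "Ugate N ones f = (\<lambda>x. omega N ^ wt x * f x)"
proof -
  have *: "(\<Prod>i\<in>UNIV. if x $ i = 1 then omega N ^ (ones $ i) else 1) = omega N ^ wt x" for x :: "bit^'n"
    by (simp add: ones_def wt_def prod.If_cases Int_def)
  show ?thesis unfolding Ugate_def by (rule ext) (subst *, rule refl)
qed




lemma bdot_zero [simp]: "bdot x 0 = 0" "bdot 0 x = 0"
  unfolding bdot_def by simp_all

lemma sgn_bit_0 [simp]: "sgn_bit 0 = 1" unfolding sgn_bit_def by simp

lemma zero_dual: "0 \<in> dual_code C" unfolding dual_code_def by simp

lemma dual_exists:
  assumes B: "is_basis_of \<beta> C" and y: "y \<notin> C"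
  shows "\<exists>v\<in>dual_code C. bdot y v = 1"
proof -
  have C: "C = vec.span \<beta>" and ind: "vec.independent \<beta>" using B unfolding is_basis_of_def by auto
  have "vec.independent (insert y \<beta>)" using ind y C vec.span_base
    by (auto simp: vec.independent_insert)
  from vec.linear_independent_extend[OF this, of "\<lambda>x. if x = y then (\<chi> i. 1) else 0"]
  obtain f where lf: "Vector_Spaces.linear (*s) (*s) f"
    and fv: "\<forall>x\<in>insert y \<beta>. f x = (if x = y then (\<chi> i. 1) else (0::bit^'a))" by blast
  fix k :: 'a
  define v where "v = (\<chi> j. matrix f $ k $ j)"
  have bd: "bdot x v = f x $ k" for x
  proof -
    have "f x $ k = (matrix f *v x) $ k" using matrix_works[OF lf] by simp
    also have "\<dots> = (\<Sum>j\<in>UNIV. matrix f $ k $ j * x $ j)" by (simp add: matrix_vector_mult_def)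
    also have "\<dots> = bdot x v" unfolding bdot_def v_def
      by (rule sum.cong[OF refl]) (simp add: mult.commute)
    finally show ?thesis by simp
  qed
  have "y \<notin> \<beta>" using y C vec.span_base by blast
  have f0: "\<And>x. x \<in> \<beta> \<Longrightarrow> f x = 0" using fv \<open>y \<notin> \<beta>\<close> by auto
  have "f x = 0" if "x \<in> C" for x
    using vec.linear_eq_0_on_span[OF lf f0] that C by blast
  then have "v \<in> dual_code C" unfolding dual_code_def using bd by simp
  moreover have "bdot y v = 1" using bd fv by simp
  ultimately show ?thesis by blast
qed

lemma CSS_XZ: "f \<in> CSS C1 C2 \<Longrightarrow> u \<in> C2 \<Longrightarrow> v \<in> dual_code C1 \<Longrightarrow>
   sgn_bit (bdot v (y + u)) * f (y + u) = f y"
  unfolding CSS_def XZ_def by (metis (mono_tags, lifting) mem_Collect_eq)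

lemma CSS_supp:
  assumes B: "is_basis_of \<beta>1 C1" and f: "f \<in> CSS C1 C2" and "0 \<in> C2" and fy: "f y \<noteq> 0"
  shows "y \<in> C1"
proof (rule ccontr)
  assume "y \<notin> C1"
  then obtain v where v: "v \<in> dual_code C1" "bdot y v = 1" using dual_exists[OF B] by blast
  have "sgn_bit (bdot v (y + 0)) * f (y + 0) = f y" using CSS_XZ[OF f \<open>0\<in>C2\<close> v(1)] .
  then have "- f y = f y" using v(2) bdot_sym[of y v] by (simp add: sgn_bit_def)
  then have "f y + f y = 0" by (metis add.left_inverse)
  then show False using fy by simp
qed

lemma ind_CSS:
  assumes S2: "vec.subspace C2" and S1: "vec.subspace C1" and sub: "C2 \<subseteq> C1" and c: "c \<in> C1"
  shows "(\<lambda>y. if y + c \<in> C2 then 1 else 0) \<in> CSS C1 C2"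
  unfolding CSS_def XZ_def
proof (intro CollectI ballI ext)
  fix u v y assume u: "u \<in> C2" and v: "v \<in> dual_code C1"
  have e1: "y + c = (y + u + c) + u" by (simp add: add_ac)
  have e2: "y + u = (y + u + c) + c" by (simp add: add_ac)
  show "sgn_bit (bdot v (y + u)) * (if y + u + c \<in> C2 then 1 else 0) = (if y + c \<in> C2 then 1 else 0)"
  proof (cases "y + u + c \<in> C2")
    case True
    then have "y + c \<in> C2" using e1 u S2 vec.subspace_add by metis
    moreover have "y + u \<in> C1" using e2 True sub c S1 vec.subspace_add by (metis subsetD)
    then have "bdot (y + u) v = 0" using v unfolding dual_code_def by blast
    then have "bdot v (y + u) = 0" using bdot_sym[of v "y + u"] by simp
    ultimately show ?thesis using True by simp
  next
    case False
    have e3: "y + u + c = (y + c) + u" by (simp add: add_ac)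
    have "y + c \<notin> C2" using False u S2 vec.subspace_add e3 by metis
    then show ?thesis using False by simp
  qed
qed

lemma phase_CSS:
  assumes B: "is_basis_of \<beta>1 C1" and z: "0 \<in> C2" and f: "f \<in> CSS C1 C2"
    and ph: "\<forall>x\<in>C1. \<forall>u\<in>C2. \<phi> (x + u) = \<phi> x"
  shows "(\<lambda>x. \<phi> x * f x) \<in> CSS C1 C2"
  unfolding CSS_def XZ_def
proof (intro CollectI ballI ext)
  fix u v y assume u: "u \<in> C2" and v: "v \<in> dual_code C1"
  have h: "sgn_bit (bdot v (y + u)) * f (y + u) = f y" using CSS_XZ[OF f u v] .
  show "sgn_bit (bdot v (y + u)) * (\<phi> (y + u) * f (y + u)) = \<phi> y * f y"
  proof (cases "f (y + u) = 0")
    case True then show ?thesis using h by simp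
  next
    case False
    then have "y + u \<in> C1" using CSS_supp[OF B f z] by blast
    then have "\<phi> (y + u + u) = \<phi> (y + u)" using ph u by blast
    moreover have "y + u + u = y" by (simp only: add.assoc bitvec_add_self add_0_right)
    ultimately have "\<phi> (y + u) = \<phi> y" by simp
    then show ?thesis using h by (simp add: algebra_simps)
  qed
qed

definition Pw :: "nat \<Rightarrow> (bit ^ 'n) set \<Rightarrow> (bit ^ 'n) set \<Rightarrow> bool" where
  "Pw N C1 C2 \<longleftrightarrow> (\<forall>x\<in>C1. \<forall>u\<in>C2. wt (x + u) mod N = wt x mod N)"

lemma H_iff:
  assumes B: "is_basis_of \<beta>1 C1" and S2: "vec.subspace C2" and sub: "C2 \<subseteq> C1" and N: "N > 1"
  shows "ones \<in> H_N N C1 C2 \<longleftrightarrow> Pw N C1 C2"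
proof
  have S1: "vec.subspace C1" using B unfolding is_basis_of_def by blast
  have z: "0 \<in> C2" using S2 vec.subspace_0 by blast
  assume H: "ones \<in> H_N N C1 C2"
  show "Pw N C1 C2" unfolding Pw_def
  proof (intro ballI)
    fix x u assume x: "x \<in> C1" and u: "u \<in> C2"
    let ?f = "(\<lambda>y. if y + x \<in> C2 then 1 else 0) :: 'a state"
    have "?f \<in> CSS C1 C2" by (rule ind_CSS[OF S2 S1 sub x])
    then have "Ugate N ones ?f \<in> CSS C1 C2" using H unfolding H_N_def by blast
    then have "sgn_bit (bdot 0 (x + u)) * Ugate N ones ?f (x + u) = Ugate N ones ?f x"
      using CSS_XZ[OF _ u zero_dual] by blast
    moreover have "x + u + x = u" by (simp add: add_ac)
    ultimately have "omega N ^ wt (x + u) = omega N ^ wt x" using u z by (simp add: Ugate_ones)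
    then show "wt (x + u) mod N = wt x mod N" using omega_pow_eq N by simp
  qed
next
  have z: "0 \<in> C2" using S2 vec.subspace_0 by blast
  assume P: "Pw N C1 C2"
  have ph: "\<forall>x\<in>C1. \<forall>u\<in>C2. omega N ^ wt (x + u) = omega N ^ wt x"
    using P N omega_pow_eq unfolding Pw_def by (metis less_trans zero_less_one)
  have ph2: "\<forall>x\<in>C1. \<forall>u\<in>C2. 1 / omega N ^ wt (x + u) = 1 / omega N ^ wt x"
    using ph by simp
  have "Ugate N ones ` CSS C1 C2 = CSS C1 C2"
  proof
    show "Ugate N ones ` CSS C1 C2 \<subseteq> CSS C1 C2"
      using phase_CSS[OF B z _ ph] by (auto simp: Ugate_ones)
  next
    show "CSS C1 C2 \<subseteq> Ugate N ones ` CSS C1 C2"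
    proof
      fix f assume f: "f \<in> CSS C1 C2"
      let ?g = "\<lambda>x. 1 / omega N ^ wt x * f x"
      have g1: "?g \<in> CSS C1 C2" using phase_CSS[OF B z f ph2] .
      have g2: "Ugate N ones ?g = f" using omega_nz by (simp add: Ugate_ones)
      show "f \<in> Ugate N ones ` CSS C1 C2" using g1 g2 by (metis (no_types, lifting) rev_image_eqI)
    qed
  qed
  moreover have "\<forall>i. ones $ i < N" using N by (simp add: ones_def)
  ultimately show "ones \<in> H_N N C1 C2" unfolding H_N_def by blast
qed




lemma bit_UNIV: "(UNIV :: bit set) = {0, 1}"
  by (auto intro: bit.exhaust)

lemma finite_bitvec: "finite (UNIV :: (bit ^ 'n) set)"
proof -
  have "finite {f :: 'n \<Rightarrow> bit. \<forall>x. (x \<in> UNIV \<longrightarrow> f x \<in> UNIV) \<and> (x \<notin> UNIV \<longrightarrow> f x = 0)}"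
    by (rule finite_set_of_finite_funs) (simp_all add: bit_UNIV)
  then have "finite (vec_lambda ` UNIV :: (bit ^ 'n) set)" by simp
  moreover have "(UNIV :: (bit ^ 'n) set) = vec_lambda ` UNIV"
    by (metis surjI vec_lambda_eta)
  ultimately show ?thesis by simp
qed

lemma finite_bvecs: "finite (bvecs K)"
proof -
  have "finite {f :: nat \<Rightarrow> bit. \<forall>x. (x \<in> {..<K} \<longrightarrow> f x \<in> UNIV) \<and> (x \<notin> {..<K} \<longrightarrow> f x = 0)}"
    by (rule finite_set_of_finite_funs) (simp_all add: bit_UNIV)
  moreover have "bvecs K = {f :: nat \<Rightarrow> bit. \<forall>x. (x \<in> {..<K} \<longrightarrow> f x \<in> UNIV) \<and> (x \<notin> {..<K} \<longrightarrow> f x = 0)}"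
    unfolding bvecs_def by auto
  ultimately show ?thesis by simp
qed

lemma bvecs_eq: "v \<in> bvecs K \<Longrightarrow> v' \<in> bvecs K \<Longrightarrow> (\<forall>i<K. v i = v' i) \<Longrightarrow> v = v'"
  unfolding bvecs_def mem_Collect_eq by (intro ext) (metis not_less)

lemma bvecs_iff: "v \<in> bvecs K \<Longrightarrow> v' \<in> bvecs K \<Longrightarrow> (\<forall>i<K. v i = v' i) \<longleftrightarrow> v = v'"
  using bvecs_eq by blast

locale ctx =
  fixes C1 C2 \<beta>1 \<beta>2 :: "(bit ^ 'n) set" and w :: "nat \<Rightarrow> bit ^ 'n" and K N :: nat
  assumes sub: "C2 \<subseteq> C1" and B1: "is_basis_of \<beta>1 C1" and B2: "is_basis_of \<beta>2 C2"
    and bsub: "\<beta>2 \<subseteq> \<beta>1" and inj: "inj_on w {..<K}" and wimg: "w ` {..<K} = \<beta>1 - \<beta>2"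
    and N: "N > 1"
begin

abbreviation E where "E v \<equiv> (\<Sum>i<K. v i *s w i)"

lemma S1: "vec.subspace C1" and S2: "vec.subspace C2" and C1s: "C1 = vec.span \<beta>1"
  and C2s: "C2 = vec.span \<beta>2" and ind1: "vec.independent \<beta>1"
  using B1 B2 unfolding is_basis_of_def by auto

lemma z: "0 \<in> C2" using S2 vec.subspace_0 by blast

lemma finC2: "finite C2" by (rule finite_subset[OF subset_UNIV finite_bitvec])

lemma wC1: "i < K \<Longrightarrow> w i \<in> C1"
  using wimg B1 unfolding is_basis_of_def by blast

lemma EC1: "E v \<in> C1"
  using S1 wC1 by (intro vec.subspace_sum) (auto intro: vec.subspace_scale)

lemma E_add: "E (\<lambda>i. v i + v' i) = E v + E v'"
  by (simp only: vec.scale_left_distrib sum.distrib)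

lemma E_C2: assumes EV: "E v \<in> C2" shows "\<forall>i<K. v i = 0"
proof (rule ccontr)
  assume "\<not> (\<forall>i<K. v i = 0)"
  then obtain j where j: "j < K" "v j = 1" by auto
  let ?S = "{..<K} - {j}"
  let ?s = "\<Sum>i\<in>?S. v i *s w i"
  have "E v = v j *s w j + ?s" using j by (simp add: sum.remove[of "{..<K}" j])
  then have Ev: "E v = w j + ?s" using j by simp
  have wj: "w j = E v + ?s" unfolding Ev by (simp add: add.assoc)
  have wjb: "w j \<in> \<beta>1" "w j \<notin> \<beta>2" using wimg j by auto
  have "\<beta>2 \<subseteq> \<beta>1 - {w j}" using bsub wjb by auto
  then have a: "E v \<in> vec.span (\<beta>1 - {w j})" using EV C2s vec.span_mono by blast
  have "w i \<in> \<beta>1 - {w j}" if "i \<in> ?S" for i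
    using that wimg inj j unfolding inj_on_def by auto
  then have b: "?s \<in> vec.span (\<beta>1 - {w j})"
    by (intro vec.span_sum vec.span_scale) (auto intro: vec.span_base)
  have "E v + ?s \<in> vec.span (\<beta>1 - {w j})" using a b by (rule vec.span_add)
  then have "w j \<in> vec.span (\<beta>1 - {w j})" by (simp only: wj[symmetric])
  then have "vec.dependent \<beta>1" unfolding vec.dependent_def using wjb by blast
  then show False using ind1 by blast
qed

lemma decomp: assumes x: "x \<in> C1" shows "\<exists>u\<in>C2. \<exists>v\<in>bvecs K. x = u + E v"
proof -
  have "\<beta>1 = \<beta>2 \<union> w ` {..<K}" using bsub wimg by auto
  then have "x \<in> vec.span (\<beta>2 \<union> w ` {..<K})" using x C1s by simp
  then obtain a b where ab: "x = a + b" "a \<in> vec.span \<beta>2" "b \<in> vec.span (w ` {..<K})"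
    unfolding vec.span_Un by blast
  obtain c where c: "b = (\<Sum>s\<in>w ` {..<K}. c s *s s)"
    using ab(3) vec.span_finite[of "w ` {..<K}"] by auto
  also have "\<dots> = (\<Sum>i<K. c (w i) *s w i)" by (simp add: sum.reindex[OF inj])
  finally have b: "b = (\<Sum>i<K. c (w i) *s w i)" .
  define v where "v = (\<lambda>i. if i < K then c (w i) else 0)"
  have "v \<in> bvecs K" unfolding v_def bvecs_def by simp
  moreover have "E v = b" unfolding b v_def by (rule sum.cong) auto
  ultimately show ?thesis using ab C2s by blast
qed

abbreviation cc :: complex where "cc \<equiv> 1 / complex_of_real (sqrt (real (card C2)))"

lemma cc_nz: "cc \<noteq> 0"
proof -
  have "card C2 > 0" using finC2 z card_gt_0_iff by blast
  then show ?thesis by simp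
qed

lemma E_eq: "(\<forall>i<K. v i = v0 i) \<Longrightarrow> E v = E v0"
  by (rule sum.cong) auto

lemma E_mem: "E v0 + E v \<in> C2 \<longleftrightarrow> (\<forall>i<K. v i = v0 i)"
proof
  assume "E v0 + E v \<in> C2"
  then have "E (\<lambda>i. v0 i + v i) \<in> C2" by (simp only: E_add)
  then have "\<forall>i<K. v0 i + v i = 0" by (rule E_C2)
  then show "\<forall>i<K. v i = v0 i" by (metis add_bit_eq_xor bit_not_one_iff bit_not_zero_iff xor_self_eq xor.left_neutral xor.right_neutral)
next
  assume "\<forall>i<K. v i = v0 i"
  then have "E v = E v0" by (rule E_eq)
  then show "E v0 + E v \<in> C2" using z by simp
qed

lemma logket_E: "logket C2 w K v (E v0) = (if (\<forall>i<K. v i = v0 i) then cc else 0)"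
proof -
  have eq: "(E v0 = u + E v) = (u = E v0 + E v)" for u
  proof
    assume h: "E v0 = u + E v"
    have "E v0 + E v = u + (E v + E v)" unfolding h by (simp only: add.assoc)
    then show "u = E v0 + E v" by (simp only: bitvec_add_self add_0_right)
  next
    assume h: "u = E v0 + E v"
    have "u + E v = E v0 + (E v + E v)" unfolding h by (simp only: add.assoc)
    then show "E v0 = u + E v" by (simp only: bitvec_add_self add_0_right)
  qed
  have "(\<Sum>u\<in>C2. ket (u + E v) (E v0)) = (\<Sum>u\<in>C2. if u = E v0 + E v then 1 else 0)"
    unfolding ket_def by (rule sum.cong[OF refl]) (simp add: eq)
  also have "\<dots> = (if E v0 + E v \<in> C2 then 1 else 0)"
    using finC2 by (simp add: sum.delta')
  finally have *: "(\<Sum>u\<in>C2. ket (u + E v) (E v0)) = (if (\<forall>i<K. v i = v0 i) then 1 else 0)"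
    unfolding E_mem .
  have "logket C2 w K v (E v0) = cc * (\<Sum>u\<in>C2. ket (u + E v) (E v0))"
    unfolding logket_def encword_def by simp
  then show ?thesis by (simp only: * if_distrib[of "\<lambda>x. cc * x"] mult_1_right mult_zero_right)
qed

lemma enc_E: assumes v0: "v0 \<in> bvecs K" shows "enc C2 w K g (E v0) = g v0 * cc"
proof -
  have "enc C2 w K g (E v0) = (\<Sum>v\<in>bvecs K. g v * (if v = v0 then cc else 0))"
    unfolding enc_def logket_E
    by (rule sum.cong[OF refl]) (simp add: bvecs_iff[OF _ v0])
  also have "\<dots> = g v0 * cc" using finite_bvecs v0
    by (simp add: if_distrib sum.delta' cong: if_cong)
  finally show ?thesis .
qed

lemma inj_enc: "inj_on (enc C2 w K) (LS K)"
proof (rule inj_onI)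
  fix g1 g2 assume g: "g1 \<in> LS K" "g2 \<in> LS K" and e: "enc C2 w K g1 = enc C2 w K g2"
  show "g1 = g2"
  proof
    fix v show "g1 v = g2 v"
    proof (cases "v \<in> bvecs K")
      case True
      have "enc C2 w K g1 (E v) = enc C2 w K g2 (E v)" using e by simp
      then have "g1 v * cc = g2 v * cc" by (simp only: enc_E[OF True])
      then show ?thesis using cc_nz by (metis mult_right_cancel)
    next
      case False then show ?thesis using g unfolding LS_def by simp
    qed
  qed
qed

definition D :: "((nat \<Rightarrow> bit) \<Rightarrow> complex) \<Rightarrow> ((nat \<Rightarrow> bit) \<Rightarrow> complex)" where
  "D g = (\<lambda>v. omega N ^ wt (E v) * g v)"

lemma D_LS: "g \<in> LS K \<Longrightarrow> D g \<in> LS K"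
  unfolding D_def LS_def by simp

lemma keyphase:
  assumes P: "Pw N C1 C2" and u: "u \<in> C2"
  shows "omega N ^ wt y * ket (u + E v) y = omega N ^ wt (E v) * ket (u + E v) y"
proof (cases "y = u + E v")
  case True
  have "wt (E v + u) mod N = wt (E v) mod N" using P EC1 u unfolding Pw_def by blast
  then have "omega N ^ wt y = omega N ^ wt (E v)" using True N omega_pow_eq
    by (simp add: add.commute)
  then show ?thesis by simp
next
  case False then show ?thesis unfolding ket_def by simp
qed

lemma logphase:
  assumes P: "Pw N C1 C2"
  shows "omega N ^ wt y * logket C2 w K v y = omega N ^ wt (E v) * logket C2 w K v y"
proof -
  have "omega N ^ wt y * logket C2 w K v y = cc * (\<Sum>u\<in>C2. omega N ^ wt y * ket (u + E v) y)"
    unfolding logket_def encword_def by (simp add: sum_distrib_left algebra_simps)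
  also have "\<dots> = cc * (\<Sum>u\<in>C2. omega N ^ wt (E v) * ket (u + E v) y)"
  proof -
    have "(\<Sum>u\<in>C2. omega N ^ wt y * ket (u + E v) y) = (\<Sum>u\<in>C2. omega N ^ wt (E v) * ket (u + E v) y)"
      by (rule sum.cong[OF refl]) (rule keyphase[OF P])
    then show ?thesis by (simp only:)
  qed
  also have "\<dots> = omega N ^ wt (E v) * logket C2 w K v y"
    unfolding logket_def encword_def by (simp add: sum_distrib_left algebra_simps)
  finally show ?thesis .
qed

lemma Ugate_enc: assumes P: "Pw N C1 C2" shows "Ugate N ones (enc C2 w K g) = enc C2 w K (D g)"
proof
  fix y
  have "Ugate N ones (enc C2 w K g) y = (\<Sum>v\<in>bvecs K. g v * (omega N ^ wt y * logket C2 w K v y))"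
    unfolding Ugate_ones enc_def by (simp add: sum_distrib_left algebra_simps)
  also have "\<dots> = (\<Sum>v\<in>bvecs K. g v * (omega N ^ wt (E v) * logket C2 w K v y))"
    by (rule sum.cong[OF refl]) (subst logphase[OF P], rule refl)
  also have "\<dots> = enc C2 w K (D g) y"
    unfolding enc_def D_def by (simp add: algebra_simps)
  finally show "Ugate N ones (enc C2 w K g) y = enc C2 w K (D g) y" .
qed

lemma logact: assumes P: "Pw N C1 C2" and g: "g \<in> LS K"
  shows "logical_action C2 w K (Ugate N ones) g = D g"
  unfolding logical_action_def Ugate_enc[OF P]
  by (rule the_inv_into_f_f[OF inj_enc D_LS[OF g]])

end



definition delta :: "(nat \<Rightarrow> bit) \<Rightarrow> (nat \<Rightarrow> bit) \<Rightarrow> complex" where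
  "delta v = (\<lambda>x. if x = v then 1 else 0)"

lemma delta_LS: "v \<in> bvecs K \<Longrightarrow> delta v \<in> LS K"
  unfolding delta_def LS_def by auto

lemma tensor_delta: assumes v: "v \<in> bvecs K" and v': "v' \<in> bvecs K"
  shows "tensor_op K Ef (delta v) v' = (\<Prod>i<K. Ef i (v' i) (v i))"
  unfolding tensor_op_def delta_def using v v' finite_bvecs
  by (simp add: if_distrib[of "\<lambda>x. _ * x"] sum.delta' cong: if_cong)

lemma prod_U1: fixes K :: nat
  shows "(\<Prod>i<K. U1 N (a i) (v' i) (x i)) =
     (if (\<forall>i<K. v' i = x i) then (\<Prod>i<K. if v' i = 1 then omega N ^ a i else 1) else 0)"
proof (cases "\<forall>i<K. v' i = x i")
  case True
  have eq: "(\<Prod>i<K. U1 N (a i) (v' i) (x i)) = (\<Prod>i<K. if v' i = 1 then omega N ^ a i else 1)"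
    by (rule prod.cong[OF refl]) (use True in \<open>simp add: U1_def\<close>)
  show ?thesis unfolding if_P[OF True] by (rule eq)
next
  case False
  then obtain j where "j < K" "v' j \<noteq> x j" by blast
  then have "U1 N (a j) (v' j) (x j) = 0" unfolding U1_def by simp
  then have "(\<Prod>i<K. U1 N (a i) (v' i) (x i)) = 0" using \<open>j < K\<close>
    by (intro prod_zero finite_lessThan) blast
  then show ?thesis unfolding if_not_P[OF False] .
qed

lemma prod_omega: fixes K :: nat shows "(\<Prod>i<K. if v i = 1 then omega N ^ a i else 1) = omega N ^ (\<Sum>i<K. of_bit (v i) * a i)"
  unfolding power_sum
proof (rule prod.cong[OF refl])
  fix i show "(if v i = 1 then omega N ^ a i else 1) = omega N ^ (of_bit (v i) * a i)"
    by (cases "v i") simp_all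
qed

lemma tensor_diag: assumes g: "g \<in> LS K"
  shows "tensor_op K (\<lambda>i. U1 N (a i)) g = (\<lambda>v. omega N ^ (\<Sum>i<K. of_bit (v i) * a i) * g v)"
proof
  fix v'
  show "tensor_op K (\<lambda>i. U1 N (a i)) g v' = omega N ^ (\<Sum>i<K. of_bit (v' i) * a i) * g v'"
  proof (cases "v' \<in> bvecs K")
    case True
    have "tensor_op K (\<lambda>i. U1 N (a i)) g v' =
      (\<Sum>x\<in>bvecs K. (if x = v' then (\<Prod>i<K. if v' i = 1 then omega N ^ a i else 1) else 0) * g x)"
      unfolding tensor_op_def if_P[OF True]
    proof (rule sum.cong[OF refl])
      fix x assume x: "x \<in> bvecs K"
      have "(\<forall>i<K. v' i = x i) = (x = v')" using bvecs_iff[OF True x] by auto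
      then show "(\<Prod>i<K. U1 N (a i) (v' i) (x i)) * g x =
        (if x = v' then \<Prod>i<K. if v' i = 1 then omega N ^ a i else 1 else 0) * g x"
        by (simp only: prod_U1)
    qed
    also have "\<dots> = (\<Prod>i<K. if v' i = 1 then omega N ^ a i else 1) * g v'"
      using True finite_bvecs by (simp add: if_distrib[of "\<lambda>x. x * _"] sum.delta' cong: if_cong)
    finally show ?thesis by (simp only: prod_omega)
  next
    case False then show ?thesis using g unfolding tensor_op_def LS_def by simp
  qed
qed

lemma unitary_U1: "unitary2 (U1 N a)"
proof -
  have n: "cnj (omega N ^ a) * omega N ^ a = 1"
    using complex_norm_square[of "omega N ^ a"] by (simp add: norm_power norm_omega mult.commute)
  show ?thesis unfolding unitary2_def
  proof (intro allI)
    fix x y :: bit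
    show "(\<Sum>k\<in>{0,1}. cnj (U1 N a k x) * U1 N a k y) = (if x = y then 1 else 0)"
      using n by (cases x rule: bit.exhaust; cases y rule: bit.exhaust) (simp_all add: U1_def)
  qed
qed




lemma wt_0 [simp]: "wt (0::bit^'n) = 0" unfolding wt_def by simp

context ctx
begin

lemma N0: "N > 0" using N by simp

lemma Pw_from: assumes R: "\<forall>u\<in>C2. \<forall>v\<in>bvecs K. wt (u + E v) mod N = h v mod N"
  shows "Pw N C1 C2"
  unfolding Pw_def
proof (intro ballI)
  fix x u assume x: "x \<in> C1" and u: "u \<in> C2"
  obtain u' v where u': "u' \<in> C2" and v: "v \<in> bvecs K" and xe: "x = u' + E v" using decomp[OF x] by blast
  have xe2: "x + u = (u' + u) + E v" unfolding xe by (simp add: add_ac)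
  have "u' + u \<in> C2" using u u' S2 vec.subspace_add by blast
  then have "wt ((u' + u) + E v) mod N = h v mod N" using R v by blast
  then have "wt (x + u) mod N = h v mod N" by (simp only: xe2)
  also have "\<dots> = wt x mod N" using R u' v xe by simp
  finally show "wt (x + u) mod N = wt x mod N" .
qed

lemma H_iff': "ones \<in> H_N N C1 C2 \<longleftrightarrow> Pw N C1 C2"
  using H_iff[OF B1 S2 sub N] .

lemma diag_action:
  assumes P: "Pw N C1 C2"
    and a: "\<forall>v\<in>bvecs K. wt (E v) mod N = (\<Sum>i<K. of_bit (v i) * a i) mod N"
  shows "\<forall>g\<in>LS K. logical_action C2 w K (Ugate N ones) g = tensor_op K (\<lambda>i. U1 N (a i)) g"
proof
  fix g assume g: "g \<in> LS K"
  show "logical_action C2 w K (Ugate N ones) g = tensor_op K (\<lambda>i. U1 N (a i)) g"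
    unfolding logact[OF P g] tensor_diag[OF g] D_def
  proof
    fix v
    show "omega N ^ wt (E v) * g v = omega N ^ (\<Sum>i<K. of_bit (v i) * a i) * g v"
    proof (cases "v \<in> bvecs K")
      case True
      then have "omega N ^ wt (E v) = omega N ^ (\<Sum>i<K. of_bit (v i) * a i)"
        using a omega_pow_eq[OF N0] by blast
      then show ?thesis by simp
    next
      case False then show ?thesis using g unfolding LS_def by simp
    qed
  qed
qed

lemma action_delta: assumes P: "Pw N C1 C2" and v: "v \<in> bvecs K"
  shows "logical_action C2 w K (Ugate N ones) (delta v) v = omega N ^ wt (E v)"
  using logact[OF P delta_LS[OF v]] unfolding D_def delta_def by simp

lemma E0: "E (\<lambda>_. 0) = 0" by simp

lemma E_unit: assumes j: "j < K" shows "E (\<lambda>i. if i = j then 1 else 0) = w j"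
proof -
  have "E (\<lambda>i. if i = j then 1 else 0) = (\<Sum>i<K. if i = j then w i else 0)"
    by (rule sum.cong[OF refl]) simp
  also have "\<dots> = w j" using j by (simp add: sum.delta')
  finally show ?thesis .
qed

lemma diag_forward:
  assumes F: "\<forall>v\<in>bvecs K. (\<Prod>i<K. Ef i (v i) (v i)) = omega N ^ wt (E v)"
  shows "\<forall>v\<in>bvecs K. omega N ^ wt (E v) = omega N ^ (\<Sum>i<K. of_bit (v i) * wt (w i))"
proof
  fix v assume v: "v \<in> bvecs K"
  define A where "A = (\<Prod>i<K. Ef i 0 0)"
  have "(\<lambda>_. 0) \<in> bvecs K" unfolding bvecs_def by simp
  then have A1: "A = 1" using F unfolding A_def by (simp only: E0 wt_0 power_0)
  have b: "Ef j 1 1 = Ef j 0 0 * omega N ^ wt (w j)" if j: "j < K" for j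
  proof -
    let ?e = "\<lambda>i. if i = j then (1::bit) else 0"
    have "?e \<in> bvecs K" unfolding bvecs_def using j by simp
    then have h: "(\<Prod>i<K. Ef i (?e i) (?e i)) = omega N ^ wt (w j)"
      using F E_unit[OF j] by metis
    define R where "R = (\<Prod>i\<in>{..<K} - {j}. Ef i 0 0)"
    have "(\<Prod>i<K. Ef i (?e i) (?e i)) = Ef j 1 1 * (\<Prod>i\<in>{..<K} - {j}. Ef i (?e i) (?e i))"
      using j by (simp add: prod.remove[of "{..<K}" j])
    also have "(\<Prod>i\<in>{..<K} - {j}. Ef i (?e i) (?e i)) = R"
      unfolding R_def by (rule prod.cong[OF refl]) auto
    finally have h2: "Ef j 1 1 * R = omega N ^ wt (w j)" using h by simp
    have "A = Ef j 0 0 * R" unfolding A_def R_def using j by (simp add: prod.remove[of "{..<K}" j])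
    then have h3: "Ef j 0 0 * R = 1" using A1 by simp
    have "Ef j 1 1 = Ef j 1 1 * (Ef j 0 0 * R)" using h3 by simp
    also have "\<dots> = Ef j 0 0 * (Ef j 1 1 * R)" by (simp add: algebra_simps)
    finally show ?thesis using h2 by simp
  qed
  have "omega N ^ wt (E v) = (\<Prod>i<K. Ef i (v i) (v i))" using F v by simp
  also have "\<dots> = (\<Prod>i<K. Ef i 0 0 * (if v i = 1 then omega N ^ wt (w i) else 1))"
  proof (rule prod.cong[OF refl])
    fix i assume "i \<in> {..<K}"
    then show "Ef i (v i) (v i) = Ef i 0 0 * (if v i = 1 then omega N ^ wt (w i) else 1)"
      using b[of i] by (cases "v i") simp_all
  qed
  also have "\<dots> = A * (\<Prod>i<K. if v i = 1 then omega N ^ wt (w i) else 1)"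
    unfolding A_def by (rule prod.distrib)
  also have "\<dots> = omega N ^ (\<Sum>i<K. of_bit (v i) * wt (w i))"
    using A1 prod_omega[where K=K and v=v and N=N and a="\<lambda>i. wt (w i)"] by simp
  finally show "omega N ^ wt (E v) = omega N ^ (\<Sum>i<K. of_bit (v i) * wt (w i))" .
qed

end



context ctx
begin

lemma shiftP: assumes P: "Pw N C1 C2" and u: "u \<in> C2"
  shows "wt (u + E v) mod N = wt (E v) mod N"
  using P EC1 u unfolding Pw_def by (metis add.commute)

lemma part1: "ones \<in> T_N N C1 C2 w K \<longleftrightarrow>
   (\<forall>u\<in>C2. \<forall>v\<in>bvecs K. wt (u + E v) mod N = (\<Sum>i<K. of_bit (v i) * wt (w i)) mod N)"
proof
  assume T: "ones \<in> T_N N C1 C2 w K"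
  then have P: "Pw N C1 C2" using H_iff' unfolding T_N_def by blast
  obtain Ef where act: "\<forall>g\<in>LS K. logical_action C2 w K (Ugate N ones) g = tensor_op K Ef g"
    using T unfolding T_N_def by blast
  have F: "\<forall>v\<in>bvecs K. (\<Prod>i<K. Ef i (v i) (v i)) = omega N ^ wt (E v)"
  proof
    fix v assume v: "v \<in> bvecs K"
    have "omega N ^ wt (E v) = logical_action C2 w K (Ugate N ones) (delta v) v"
      using action_delta[OF P v] by simp
    also have "\<dots> = tensor_op K Ef (delta v) v"
      using act[rule_format, OF delta_LS[OF v]] by (rule fun_cong)
    also have "\<dots> = (\<Prod>i<K. Ef i (v i) (v i))" by (rule tensor_delta[OF v v])
    finally show "(\<Prod>i<K. Ef i (v i) (v i)) = omega N ^ wt (E v)" by simp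
  qed
  have D: "\<forall>v\<in>bvecs K. omega N ^ wt (E v) = omega N ^ (\<Sum>i<K. of_bit (v i) * wt (w i))"
    by (rule diag_forward[where Ef=Ef, OF F])
  show "\<forall>u\<in>C2. \<forall>v\<in>bvecs K. wt (u + E v) mod N = (\<Sum>i<K. of_bit (v i) * wt (w i)) mod N"
  proof (intro ballI)
    fix u v assume u: "u \<in> C2" and v: "v \<in> bvecs K"
    have "omega N ^ wt (E v) = omega N ^ (\<Sum>i<K. of_bit (v i) * wt (w i))" using D v by blast
    then have "wt (E v) mod N = (\<Sum>i<K. of_bit (v i) * wt (w i)) mod N" using omega_pow_eq[OF N0] by blast
    then show "wt (u + E v) mod N = (\<Sum>i<K. of_bit (v i) * wt (w i)) mod N" using shiftP[OF P u, of v] by simp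
  qed
next
  assume R: "\<forall>u\<in>C2. \<forall>v\<in>bvecs K. wt (u + E v) mod N = (\<Sum>i<K. of_bit (v i) * wt (w i)) mod N"
  have P: "Pw N C1 C2" by (rule Pw_from[OF R])
  have a: "\<forall>v\<in>bvecs K. wt (E v) mod N = (\<Sum>i<K. of_bit (v i) * wt (w i)) mod N"
  proof
    fix v assume v: "v \<in> bvecs K"
    have "wt (0 + E v) mod N = (\<Sum>i<K. of_bit (v i) * wt (w i)) mod N" using R z v by blast
    then show "wt (E v) mod N = (\<Sum>i<K. of_bit (v i) * wt (w i)) mod N" by simp
  qed
  have "\<forall>g\<in>LS K. logical_action C2 w K (Ugate N ones) g = tensor_op K (\<lambda>i. U1 N (wt (w i))) g"
    by (rule diag_action[OF P a])
  moreover have "\<forall>i<K. unitary2 (U1 N (wt (w i)))" using unitary_U1 by blast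
  moreover have "ones \<in> H_N N C1 C2" using H_iff' P by blast
  ultimately show "ones \<in> T_N N C1 C2 w K" unfolding T_N_def
    by (intro CollectI conjI exI[where x="\<lambda>i. U1 N (wt (w i))"]) simp_all
qed

lemma part2: "(ones \<in> T_N N C1 C2 w K \<and>
     (\<forall>g\<in>LS K. logical_action C2 w K (Ugate N ones) g = tensor_op K (\<lambda>i. U1 N 1) g)) \<longleftrightarrow>
   (\<forall>u\<in>C2. \<forall>v\<in>bvecs K. wt (u + E v) mod N = (\<Sum>i<K. of_bit (v i) :: nat) mod N)"
proof
  assume T: "ones \<in> T_N N C1 C2 w K \<and>
     (\<forall>g\<in>LS K. logical_action C2 w K (Ugate N ones) g = tensor_op K (\<lambda>i. U1 N 1) g)"
  then have P: "Pw N C1 C2" using H_iff' unfolding T_N_def by blast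
  have D: "\<forall>v\<in>bvecs K. omega N ^ wt (E v) = omega N ^ (\<Sum>i<K. of_bit (v i) :: nat)"
  proof
    fix v assume v: "v \<in> bvecs K"
    have "omega N ^ wt (E v) = logical_action C2 w K (Ugate N ones) (delta v) v"
      using action_delta[OF P v] by simp
    also have "\<dots> = tensor_op K (\<lambda>i. U1 N 1) (delta v) v"
      using T[THEN conjunct2, rule_format, OF delta_LS[OF v]] by (rule fun_cong)
    also have "\<dots> = omega N ^ (\<Sum>i<K. of_bit (v i) * 1)"
      unfolding tensor_diag[OF delta_LS[OF v]] by (simp add: delta_def)
    finally show "omega N ^ wt (E v) = omega N ^ (\<Sum>i<K. of_bit (v i) :: nat)" by simp
  qed
  show "\<forall>u\<in>C2. \<forall>v\<in>bvecs K. wt (u + E v) mod N = (\<Sum>i<K. of_bit (v i) :: nat) mod N"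
  proof (intro ballI)
    fix u v assume u: "u \<in> C2" and v: "v \<in> bvecs K"
    have "omega N ^ wt (E v) = omega N ^ (\<Sum>i<K. of_bit (v i) :: nat)" using D v by blast
    then have "wt (E v) mod N = (\<Sum>i<K. of_bit (v i) :: nat) mod N" using omega_pow_eq[OF N0] by blast
    then show "wt (u + E v) mod N = (\<Sum>i<K. of_bit (v i) :: nat) mod N" using shiftP[OF P u, of v] by simp
  qed
next
  assume R: "\<forall>u\<in>C2. \<forall>v\<in>bvecs K. wt (u + E v) mod N = (\<Sum>i<K. of_bit (v i) :: nat) mod N"
  have P: "Pw N C1 C2" by (rule Pw_from[OF R])
  have a: "\<forall>v\<in>bvecs K. wt (E v) mod N = (\<Sum>i<K. of_bit (v i) * (\<lambda>_. 1::nat) i) mod N"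
  proof
    fix v assume v: "v \<in> bvecs K"
    have "wt (0 + E v) mod N = (\<Sum>i<K. of_bit (v i) :: nat) mod N" using R z v by blast
    then show "wt (E v) mod N = (\<Sum>i<K. of_bit (v i) * (\<lambda>_. 1::nat) i) mod N" by simp
  qed
  have act: "\<forall>g\<in>LS K. logical_action C2 w K (Ugate N ones) g = tensor_op K (\<lambda>i. U1 N 1) g"
    using diag_action[OF P a] by simp
  moreover have "\<forall>i<K. unitary2 (U1 N 1)" using unitary_U1 by blast
  moreover have "ones \<in> H_N N C1 C2" using H_iff' P by blast
  ultimately have "ones \<in> T_N N C1 C2 w K" unfolding T_N_def
    by (intro CollectI conjI exI[where x="\<lambda>i. U1 N 1"]) simp_all
  then show "ones \<in> T_N N C1 C2 w K \<and>
     (\<forall>g\<in>LS K. logical_action C2 w K (Ugate N ones) g = tensor_op K (\<lambda>i. U1 N 1) g)"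
    using act by blast
qed

lemma part3: "ones \<in> Id_N N C1 C2 \<longleftrightarrow> divisible_code N C1"
proof
  assume I: "ones \<in> Id_N N C1 C2"
  show "divisible_code N C1" unfolding divisible_code_def
  proof
    fix c assume c: "c \<in> C1"
    let ?f = "(\<lambda>y. if y + c \<in> C2 then 1 else 0) :: 'n state"
    have "?f \<in> CSS C1 C2" by (rule ind_CSS[OF S2 S1 sub c])
    then have "Ugate N ones ?f c = ?f c" using I unfolding Id_N_def by simp
    then have "omega N ^ wt c = omega N ^ 0" using z by (simp add: Ugate_ones)
    then have "wt c mod N = 0" using omega_pow_eq[OF N0, of "wt c" 0] by simp
    then show "N dvd wt c" by (simp add: dvd_eq_mod_eq_0)
  qed
next
  assume dv: "divisible_code N C1"
  have P: "Pw N C1 C2" unfolding Pw_def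
  proof (intro ballI)
    fix x u assume x: "x \<in> C1" and u: "u \<in> C2"
    have "x + u \<in> C1" using x u sub S1 vec.subspace_add by blast
    then show "wt (x + u) mod N = wt x mod N" using dv x unfolding divisible_code_def
      by (simp add: dvd_eq_mod_eq_0)
  qed
  have "\<forall>f\<in>CSS C1 C2. Ugate N ones f = f"
  proof
    fix f assume f: "f \<in> CSS C1 C2"
    show "Ugate N ones f = f" unfolding Ugate_ones
    proof
      fix x show "omega N ^ wt x * f x = f x"
      proof (cases "f x = 0")
        case False
        then have "x \<in> C1" using CSS_supp[OF B1 f z] by blast
        then have "wt x mod N = 0 mod N" using dv unfolding divisible_code_def by simp
        then have "omega N ^ wt x = omega N ^ 0" using omega_pow_eq[OF N0] by blast
        then show ?thesis by simp
      qed simp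
    qed
  qed
  then show "ones \<in> Id_N N C1 C2" using H_iff' P unfolding Id_N_def by blast
qed

end

theorem corollary3p17:
  fixes C1 C2 \<beta>1 \<beta>2 :: "(bit ^ 'n) set"
    and w :: "nat \<Rightarrow> bit ^ 'n" and K :: nat and N l :: nat
  assumes "C2 \<subseteq> C1"
    and "is_basis_of \<beta>1 C1" and "is_basis_of \<beta>2 C2" and "\<beta>2 \<subseteq> \<beta>1"
    and "inj_on w {..<K}" and "w ` {..<K} = \<beta>1 - \<beta>2"
    and "l > 0" and "N = 2 ^ l"
  shows "(ones \<in> T_N N C1 C2 w K \<longleftrightarrow>
           (\<forall>u\<in>C2. \<forall>v\<in>bvecs K.
              wt (u + (\<Sum>i<K. v i *s w i)) mod N = (\<Sum>i<K. of_bit (v i) * wt (w i)) mod N))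
    \<and> ((ones \<in> T_N N C1 C2 w K \<and>
          (\<forall>g\<in>LS K. logical_action C2 w K (Ugate N ones) g = tensor_op K (\<lambda>i. U1 N 1) g)) \<longleftrightarrow>
           (\<forall>u\<in>C2. \<forall>v\<in>bvecs K.
              wt (u + (\<Sum>i<K. v i *s w i)) mod N = (\<Sum>i<K. of_bit (v i) :: nat) mod N))
    \<and> (ones \<in> Id_N N C1 C2 \<longleftrightarrow> divisible_code N C1)"
  proof -
  interpret ctx C1 C2 \<beta>1 \<beta>2 w K N
  proof
    have "(1::nat) < 2 ^ l" using assms(7) by (rule one_less_power[rotated]) simp
    then show "N > 1" using assms(8) by simp
  qed (use assms in auto)
  show ?thesis using part1 part2 part3 by blast
qed

end
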